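(* Let $(\mathcal C,\otimes,\mathbb I)$ be a monoidal category with pushouts and $(H,\Delta,\varepsilon)$ a coalgebra in $\mathcal C$. Let $(X,X\bullet H,\pi_X,\rho_X)$ be a geometric partial $H$-comodule, and consider the parallel comodule morphisms $\rho_X\otimes H,\ (\pi_X\otimes H)\circ(X\otimes\Delta):(X\otimes H,X\otimes\Delta)\to((X\bullet H)\otimes H,(X\bullet H)\otimes\Delta)$. Let $(Y,\delta)$ be a global $H$-comodule. Then the maps $$g\mapsto (g\otimes H)\circ\delta,\qquad f\mapsto (X\otimes\varepsilon)\circ f$$ are mutually inverse bijections between $\mathrm{Hom}_{\mathsf{PCom}^H}(\mathcal I(Y),X)$ and the set of comodule morphisms $f\in\mathrm{Hom}_{\mathsf{Com}^H}(Y,X\otimes H)$ satisfying $(\rho_X\otimes H)\circ f=(\pi_X\otimes H)\circ(X\otimes\Delta)\circ f$. This correspondence is natural in both $Y$ and $X$.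
   Context: $\mathcal C$ is treated as strict monoidal; the identity of an object $X$ is also written $X$. $\mathsf{Com}^H$ is the category of right $H$-comodules $(Y,\delta)$. A partial comodule datum is $(X,X\bullet H,\pi_X,\rho_X)$ with $\rho_X:X\to X\bullet H$ and $\pi_X:X\otimes H\to X\bullet H$ an epimorphism. For such a datum let: $(X\bullet H)\bullet H$ be the pushout of $\pi_X$ and $\rho_X\otimes H$, with coprojections $\rho_X\bullet H$ and $\pi_{X\bullet H}$; $X\bullet(H\otimes H)$ the pushout of $\pi_X$ and $X\otimes\Delta$, with coprojections $X\bullet\Delta$ and $\pi_{X,\Delta}:X\otimes H\otimes H\to X\bullet(H\otimes H)$; $X\bullet(H\bullet H)$ the pushout of $\pi_{X,\Delta}$ and $\pi_X\otimes H$, with coprojections $\pi'_X$ and $\pi'_{X,\Delta}$. A geometric partial $H$-comodule is a datum such that (GP1) there is $X\bullet\varepsilon:X\bullet H\to X$ with $(X\bullet\varepsilon)\circ\rho_X=\mathrm{id}_X$ and $(X\bullet\varepsilon)\circ\pi_X=X\otimes\varepsilon$; (GP2) there is an isomorphism $\theta:X\bullet(H\bullet H)\to(X\bullet H)\bullet H$ with $\theta\circ\pi'_{X,\Delta}=\pi_{X\bullet H}$ and $(\rho_X\bullet H)\circ\rho_X=\theta\circ\pi'_X\circ(X\bullet\Delta)\circ\rho_X$. Morphisms $X\to X'$ are pairs $(f,f\bullet H)$ with $\rho_{X'}\circ f=(f\bullet H)\circ\rho_X$ and $\pi_{X'}\circ(f\otimes H)=(f\bullet H)\circ\pi_X$ (determined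 by $f$); category $\mathsf{PCom}^H$. A global comodule $(Y,\delta)$ gives $\mathcal I(Y)=(Y,Y\otimes H,\mathrm{id},\delta)$; a morphism $\mathcal I(Y)\to X$ is a morphism $g:Y\to X$ in $\mathcal C$ with $\pi_X\circ(g\otimes H)\circ\delta=\rho_X\circ g$. *)

theory Defs
  imports Main
begin

record ('o,'m) smcat =
  Obj  :: "'o set"
  Arr  :: "'m set"
  Dom  :: "'m \<Rightarrow> 'o"
  Cod  :: "'m \<Rightarrow> 'o"
  Idm  :: "'o \<Rightarrow> 'm"
  Cmp  :: "'m \<Rightarrow> 'm \<Rightarrow> 'm"   (* Cmp C g f = g \<circ> f *)
  TnsO :: "'o \<Rightarrow> 'o \<Rightarrow> 'o"
  TnsM :: "'m \<Rightarrow> 'm \<Rightarrow> 'm"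
  Unt  :: "'o"

definition hom :: "('o,'m,'x) smcat_scheme \<Rightarrow> 'o \<Rightarrow> 'o \<Rightarrow> 'm set" where
  "hom C A B = {f \<in> Arr C. Dom C f = A \<and> Cod C f = B}"

definition category :: "('o,'m,'x) smcat_scheme \<Rightarrow> bool" where
  "category C \<longleftrightarrow>
     (\<forall>f\<in>Arr C. Dom C f \<in> Obj C \<and> Cod C f \<in> Obj C) \<and>
     (\<forall>A\<in>Obj C. Idm C A \<in> hom C A A) \<and>
     (\<forall>f\<in>Arr C. \<forall>g\<in>Arr C. Cod C f = Dom C g \<longrightarrow> Cmp C g f \<in> hom C (Dom C f) (Cod C g)) \<and>
     (\<forall>f\<in>Arr C. Cmp C f (Idm C (Dom C f)) = f \<and> Cmp C (Idm C (Cod C f)) f = f) \<and>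
     (\<forall>f\<in>Arr C. \<forall>g\<in>Arr C. \<forall>h\<in>Arr C. Cod C f = Dom C g \<longrightarrow> Cod C g = Dom C h \<longrightarrow>
        Cmp C h (Cmp C g f) = Cmp C (Cmp C h g) f)"

definition strict_monoidal_category :: "('o,'m,'x) smcat_scheme \<Rightarrow> bool" where
  "strict_monoidal_category C \<longleftrightarrow> category C \<and>
     Unt C \<in> Obj C \<and>
     (\<forall>A\<in>Obj C. \<forall>B\<in>Obj C. TnsO C A B \<in> Obj C) \<and>
     (\<forall>f\<in>Arr C. \<forall>g\<in>Arr C.
        TnsM C f g \<in> hom C (TnsO C (Dom C f) (Dom C g)) (TnsO C (Cod C f) (Cod C g))) \<and>
     (\<forall>A\<in>Obj C. \<forall>B\<in>Obj C. TnsM C (Idm C A) (Idm C B) = Idm C (TnsO C A B)) \<and>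
     (\<forall>f\<in>Arr C. \<forall>f'\<in>Arr C. \<forall>g\<in>Arr C. \<forall>g'\<in>Arr C.
        Cod C f = Dom C f' \<longrightarrow> Cod C g = Dom C g' \<longrightarrow>
        TnsM C (Cmp C f' f) (Cmp C g' g) = Cmp C (TnsM C f' g') (TnsM C f g)) \<and>
     (\<forall>A\<in>Obj C. \<forall>B\<in>Obj C. \<forall>D\<in>Obj C. TnsO C (TnsO C A B) D = TnsO C A (TnsO C B D)) \<and>
     (\<forall>f\<in>Arr C. \<forall>g\<in>Arr C. \<forall>h\<in>Arr C. TnsM C (TnsM C f g) h = TnsM C f (TnsM C g h)) \<and>
     (\<forall>A\<in>Obj C. TnsO C (Unt C) A = A \<and> TnsO C A (Unt C) = A) \<and>
     (\<forall>f\<in>Arr C. TnsM C (Idm C (Unt C)) f = f \<and> TnsM C f (Idm C (Unt C)) = f)"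

definition is_iso :: "('o,'m,'x) smcat_scheme \<Rightarrow> 'm \<Rightarrow> bool" where
  "is_iso C f \<longleftrightarrow> f \<in> Arr C \<and> (\<exists>g \<in> hom C (Cod C f) (Dom C f).
      Cmp C g f = Idm C (Dom C f) \<and> Cmp C f g = Idm C (Cod C f))"

definition is_epi :: "('o,'m,'x) smcat_scheme \<Rightarrow> 'm \<Rightarrow> bool" where
  "is_epi C e \<longleftrightarrow> e \<in> Arr C \<and> (\<forall>u\<in>Arr C. \<forall>v\<in>Arr C.
      Dom C u = Cod C e \<longrightarrow> Dom C v = Cod C e \<longrightarrow> Cmp C u e = Cmp C v e \<longrightarrow> u = v)"

definition is_pushout :: "('o,'m,'x) smcat_scheme \<Rightarrow> 'm \<Rightarrow> 'm \<Rightarrow> 'o \<Rightarrow> 'm \<Rightarrow> 'm \<Rightarrow> bool" where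
  "is_pushout C f g P p q \<longleftrightarrow>
     f \<in> Arr C \<and> g \<in> Arr C \<and> Dom C f = Dom C g \<and> P \<in> Obj C \<and>
     p \<in> hom C (Cod C f) P \<and> q \<in> hom C (Cod C g) P \<and> Cmp C p f = Cmp C q g \<and>
     (\<forall>Z\<in>Obj C. \<forall>u \<in> hom C (Cod C f) Z. \<forall>v \<in> hom C (Cod C g) Z.
        Cmp C u f = Cmp C v g \<longrightarrow>
        (\<exists>!h. h \<in> hom C P Z \<and> Cmp C h p = u \<and> Cmp C h q = v))"

definition has_pushouts :: "('o,'m,'x) smcat_scheme \<Rightarrow> bool" where
  "has_pushouts C \<longleftrightarrow> (\<forall>f\<in>Arr C. \<forall>g\<in>Arr C. Dom C f = Dom C g \<longrightarrow>
      (\<exists>P p q. is_pushout C f g P p q))"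

definition coalgebra :: "('o,'m,'x) smcat_scheme \<Rightarrow> 'o \<Rightarrow> 'm \<Rightarrow> 'm \<Rightarrow> bool" where
  "coalgebra C H \<Delta> \<epsilon> \<longleftrightarrow> H \<in> Obj C \<and>
     \<Delta> \<in> hom C H (TnsO C H H) \<and> \<epsilon> \<in> hom C H (Unt C) \<and>
     Cmp C (TnsM C \<Delta> (Idm C H)) \<Delta> = Cmp C (TnsM C (Idm C H) \<Delta>) \<Delta> \<and>
     Cmp C (TnsM C \<epsilon> (Idm C H)) \<Delta> = Idm C H \<and>
     Cmp C (TnsM C (Idm C H) \<epsilon>) \<Delta> = Idm C H"

definition comodule :: "('o,'m,'x) smcat_scheme \<Rightarrow> 'o \<Rightarrow> 'm \<Rightarrow> 'm \<Rightarrow> 'o \<Rightarrow> 'm \<Rightarrow> bool" where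
  "comodule C H \<Delta> \<epsilon> Y \<delta> \<longleftrightarrow> Y \<in> Obj C \<and> \<delta> \<in> hom C Y (TnsO C Y H) \<and>
     Cmp C (TnsM C \<delta> (Idm C H)) \<delta> = Cmp C (TnsM C (Idm C Y) \<Delta>) \<delta> \<and>
     Cmp C (TnsM C (Idm C Y) \<epsilon>) \<delta> = Idm C Y"

definition comodule_hom :: "('o,'m,'x) smcat_scheme \<Rightarrow> 'o \<Rightarrow> 'o \<Rightarrow> 'm \<Rightarrow> 'o \<Rightarrow> 'm \<Rightarrow> 'm \<Rightarrow> bool" where
  "comodule_hom C H Y \<delta> Y' \<delta>' f \<longleftrightarrow> f \<in> hom C Y Y' \<and>
     Cmp C \<delta>' f = Cmp C (TnsM C f (Idm C H)) \<delta>"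

definition partial_comodule_datum ::
  "('o,'m,'x) smcat_scheme \<Rightarrow> 'o \<Rightarrow> 'o \<Rightarrow> 'o \<Rightarrow> 'm \<Rightarrow> 'm \<Rightarrow> bool" where
  "partial_comodule_datum C H X XH \<pi> \<rho> \<longleftrightarrow> X \<in> Obj C \<and> XH \<in> Obj C \<and>
     \<rho> \<in> hom C X XH \<and> \<pi> \<in> hom C (TnsO C X H) XH \<and> is_epi C \<pi>"

definition GP1 :: "('o,'m,'x) smcat_scheme \<Rightarrow> 'o \<Rightarrow> 'm \<Rightarrow> 'o \<Rightarrow> 'o \<Rightarrow> 'm \<Rightarrow> 'm \<Rightarrow> bool" where
  "GP1 C H \<epsilon> X XH \<pi> \<rho> \<longleftrightarrow> (\<exists>e \<in> hom C XH X.
      Cmp C e \<rho> = Idm C X \<and> Cmp C e \<pi> = TnsM C (Idm C X) \<epsilon>)"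

text \<open>GP2, with the three pushouts of the paper:
  \<open>XHH = (X\<bullet>H)\<bullet>H\<close> (coprojections \<open>\<rho>H = \<rho>\<bullet>H\<close>, \<open>\<pi>XH = \<pi>_{X\<bullet>H}\<close>),
  \<open>XHxH = X\<bullet>(H\<otimes>H)\<close> (coprojections \<open>XD = X\<bullet>\<Delta>\<close>, \<open>\<pi>XD = \<pi>_{X,\<Delta>}\<close>),
  \<open>XHbH = X\<bullet>(H\<bullet>H)\<close> (coprojections \<open>\<pi>'X\<close>, \<open>\<pi>'XD\<close>).
  Pushouts are unique up to unique isomorphism compatible with the coprojections,
  so the condition does not depend on which pushouts are chosen.\<close>
definition GP2 :: "('o,'m,'x) smcat_scheme \<Rightarrow> 'o \<Rightarrow> 'm \<Rightarrow> 'o \<Rightarrow> 'o \<Rightarrow> 'm \<Rightarrow> 'm \<Rightarrow> bool" where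
  "GP2 C H \<Delta> X XH \<pi> \<rho> \<longleftrightarrow>
    (\<exists>XHH \<rho>H \<pi>XH XHxH XD \<pi>XD XHbH \<pi>'X \<pi>'XD \<theta>.
       is_pushout C \<pi> (TnsM C \<rho> (Idm C H)) XHH \<rho>H \<pi>XH \<and>
       is_pushout C \<pi> (TnsM C (Idm C X) \<Delta>) XHxH XD \<pi>XD \<and>
       is_pushout C \<pi>XD (TnsM C \<pi> (Idm C H)) XHbH \<pi>'X \<pi>'XD \<and>
       \<theta> \<in> hom C XHbH XHH \<and> is_iso C \<theta> \<and>
       Cmp C \<theta> \<pi>'XD = \<pi>XH \<and>
       Cmp C \<rho>H \<rho> = Cmp C \<theta> (Cmp C \<pi>'X (Cmp C XD \<rho>)))"

definition geometric_partial_comodule ::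
  "('o,'m,'x) smcat_scheme \<Rightarrow> 'o \<Rightarrow> 'm \<Rightarrow> 'm \<Rightarrow> 'o \<Rightarrow> 'o \<Rightarrow> 'm \<Rightarrow> 'm \<Rightarrow> bool" where
  "geometric_partial_comodule C H \<Delta> \<epsilon> X XH \<pi> \<rho> \<longleftrightarrow>
     partial_comodule_datum C H X XH \<pi> \<rho> \<and> GP1 C H \<epsilon> X XH \<pi> \<rho> \<and> GP2 C H \<Delta> X XH \<pi> \<rho>"

text \<open>Morphisms \<open>(X,X\<bullet>H,\<pi>,\<rho>) \<rightarrow> (X',X'\<bullet>H,\<pi>',\<rho>')\<close> in \<open>PCom^H\<close> (given by the first component).\<close>
definition pcom_hom ::
  "('o,'m,'x) smcat_scheme \<Rightarrow> 'o \<Rightarrow> 'o \<Rightarrow> 'o \<Rightarrow> 'm \<Rightarrow> 'm \<Rightarrow> 'o \<Rightarrow> 'o \<Rightarrow> 'm \<Rightarrow> 'm \<Rightarrow> 'm \<Rightarrow> bool" where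
  "pcom_hom C H X XH \<pi> \<rho> X' X'H \<pi>' \<rho>' f \<longleftrightarrow> f \<in> hom C X X' \<and>
     (\<exists>fH \<in> hom C XH X'H. Cmp C \<rho>' f = Cmp C fH \<rho> \<and>
        Cmp C \<pi>' (TnsM C f (Idm C H)) = Cmp C fH \<pi>)"

text \<open>\<open>Hom_{PCom^H}(\<I>(Y), X)\<close> for a global comodule \<open>(Y,\<delta>)\<close>, with \<open>\<I>(Y) = (Y, Y\<otimes>H, id, \<delta>)\<close>.\<close>
definition pcom_hom_from_global ::
  "('o,'m,'x) smcat_scheme \<Rightarrow> 'o \<Rightarrow> 'o \<Rightarrow> 'm \<Rightarrow> 'o \<Rightarrow> 'o \<Rightarrow> 'm \<Rightarrow> 'm \<Rightarrow> 'm set" where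
  "pcom_hom_from_global C H Y \<delta> X XH \<pi> \<rho> =
     {g \<in> hom C Y X. Cmp C \<pi> (Cmp C (TnsM C g (Idm C H)) \<delta>) = Cmp C \<rho> g}"

definition equalizing_comodule_homs ::
  "('o,'m,'x) smcat_scheme \<Rightarrow> 'o \<Rightarrow> 'm \<Rightarrow> 'o \<Rightarrow> 'm \<Rightarrow> 'o \<Rightarrow> 'o \<Rightarrow> 'm \<Rightarrow> 'm \<Rightarrow> 'm set" where
  "equalizing_comodule_homs C H \<Delta> Y \<delta> X XH \<pi> \<rho> =
     {f. comodule_hom C H Y \<delta> (TnsO C X H) (TnsM C (Idm C X) \<Delta>) f \<and>
         Cmp C (TnsM C \<rho> (Idm C H)) f =
         Cmp C (TnsM C \<pi> (Idm C H)) (Cmp C (TnsM C (Idm C X) \<Delta>) f)}"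

end

theory Submission
  imports Defs
begin


context
  fixes C :: "('o,'m,'x) smcat_scheme"
  assumes smc: "strict_monoidal_category C"
begin

lemma cat: "category C" using smc unfolding strict_monoidal_category_def by blast

lemma homD: "f \<in> hom C A B \<Longrightarrow> f \<in> Arr C \<and> Dom C f = A \<and> Cod C f = B"
  by (simp add: hom_def)

lemma hom_obj: "f \<in> hom C A B \<Longrightarrow> A \<in> Obj C \<and> B \<in> Obj C"
  using cat unfolding category_def hom_def by auto

lemma id_hom: "A \<in> Obj C \<Longrightarrow> Idm C A \<in> hom C A A"
  using cat unfolding category_def by blast

lemma comp_hom: "f \<in> hom C A B \<Longrightarrow> g \<in> hom C B D \<Longrightarrow> Cmp C g f \<in> hom C A D"
  using cat unfolding category_def hom_def by auto

lemma comp_assoc: "f \<in> hom C A B \<Longrightarrow> g \<in> hom C B D \<Longrightarrow> h \<in> hom C D E \<Longrightarrow>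
   Cmp C h (Cmp C g f) = Cmp C (Cmp C h g) f"
  using cat unfolding category_def hom_def by auto

lemma id_l: "f \<in> hom C A B \<Longrightarrow> Cmp C (Idm C B) f = f"
  using cat unfolding category_def hom_def by auto

lemma id_r: "f \<in> hom C A B \<Longrightarrow> Cmp C f (Idm C A) = f"
  using cat unfolding category_def hom_def by auto

lemma unt_obj: "Unt C \<in> Obj C" using smc unfolding strict_monoidal_category_def by blast

lemma tns_obj: "A \<in> Obj C \<Longrightarrow> B \<in> Obj C \<Longrightarrow> TnsO C A B \<in> Obj C"
  using smc unfolding strict_monoidal_category_def by blast

lemma tns_hom: "f \<in> hom C A B \<Longrightarrow> g \<in> hom C A' B' \<Longrightarrow> TnsM C f g \<in> hom C (TnsO C A A') (TnsO C B B')"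
  using smc unfolding strict_monoidal_category_def hom_def by auto

lemma tns_id: "A \<in> Obj C \<Longrightarrow> B \<in> Obj C \<Longrightarrow> TnsM C (Idm C A) (Idm C B) = Idm C (TnsO C A B)"
  using smc unfolding strict_monoidal_category_def by blast

lemma interchange: "f \<in> hom C A B \<Longrightarrow> f' \<in> hom C B D \<Longrightarrow> g \<in> hom C A' B' \<Longrightarrow> g' \<in> hom C B' D' \<Longrightarrow>
   TnsM C (Cmp C f' f) (Cmp C g' g) = Cmp C (TnsM C f' g') (TnsM C f g)"
  using smc unfolding strict_monoidal_category_def hom_def by auto

lemma tnsM_assoc: "f \<in> hom C A B \<Longrightarrow> g \<in> hom C A' B' \<Longrightarrow> h \<in> hom C A'' B'' \<Longrightarrow>
   TnsM C (TnsM C f g) h = TnsM C f (TnsM C g h)"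
  using smc unfolding strict_monoidal_category_def hom_def by auto

lemma tnsO_assoc: "A \<in> Obj C \<Longrightarrow> B \<in> Obj C \<Longrightarrow> D \<in> Obj C \<Longrightarrow> TnsO C (TnsO C A B) D = TnsO C A (TnsO C B D)"
  using smc unfolding strict_monoidal_category_def by blast

lemma unitO_l: "A \<in> Obj C \<Longrightarrow> TnsO C (Unt C) A = A"
  using smc unfolding strict_monoidal_category_def by blast
lemma unitO_r: "A \<in> Obj C \<Longrightarrow> TnsO C A (Unt C) = A"
  using smc unfolding strict_monoidal_category_def by blast
lemma unitM_l: "f \<in> hom C A B \<Longrightarrow> TnsM C (Idm C (Unt C)) f = f"
  using smc unfolding strict_monoidal_category_def hom_def by auto
lemma unitM_r: "f \<in> hom C A B \<Longrightarrow> TnsM C f (Idm C (Unt C)) = f"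
  using smc unfolding strict_monoidal_category_def hom_def by auto

end


context
  fixes C :: "('o,'m,'x) smcat_scheme"
  assumes smc: "strict_monoidal_category C"
begin

lemma A1:
  assumes g: "g \<in> hom C Y X" and d: "\<delta> \<in> hom C Y (TnsO C Y H)"
    and de: "Cmp C (TnsM C \<delta> (Idm C H)) \<delta> = Cmp C (TnsM C (Idm C Y) \<Delta>) \<delta>"
    and D: "\<Delta> \<in> hom C H (TnsO C H H)"
  shows "Cmp C (TnsM C (Idm C X) \<Delta>) (Cmp C (TnsM C g (Idm C H)) \<delta>) =
         Cmp C (TnsM C (Cmp C (TnsM C g (Idm C H)) \<delta>) (Idm C H)) \<delta>"
proof -
  have X: "X \<in> Obj C" and Y: "Y \<in> Obj C" using hom_obj[OF smc g] by auto
  have H: "H \<in> Obj C" using hom_obj[OF smc D] by auto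
  have HH: "TnsO C H H \<in> Obj C" using tns_obj[OF smc H H] .
  note IX = id_hom[OF smc X] and IY = id_hom[OF smc Y] and IH = id_hom[OF smc H] and IHH = id_hom[OF smc HH]
  have gH: "TnsM C g (Idm C H) \<in> hom C (TnsO C Y H) (TnsO C X H)" using tns_hom[OF smc g IH] .
  have XD: "TnsM C (Idm C X) \<Delta> \<in> hom C (TnsO C X H) (TnsO C X (TnsO C H H))" using tns_hom[OF smc IX D] .
  have YD: "TnsM C (Idm C Y) \<Delta> \<in> hom C (TnsO C Y H) (TnsO C Y (TnsO C H H))" using tns_hom[OF smc IY D] .
  have gHH: "TnsM C g (Idm C (TnsO C H H)) \<in> hom C (TnsO C Y (TnsO C H H)) (TnsO C X (TnsO C H H))"
    using tns_hom[OF smc g IHH] .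
  have dH: "TnsM C \<delta> (Idm C H) \<in> hom C (TnsO C Y H) (TnsO C Y (TnsO C H H))"
    using tns_hom[OF smc d IH] tnsO_assoc[OF smc Y H H] by simp
  have t1: "Cmp C (TnsM C (Idm C X) \<Delta>) (TnsM C g (Idm C H)) = TnsM C g \<Delta>"
    using interchange[OF smc g IX IH D] id_l[OF smc g] id_r[OF smc D] by simp
  have t2: "Cmp C (TnsM C g (Idm C (TnsO C H H))) (TnsM C (Idm C Y) \<Delta>) = TnsM C g \<Delta>"
    using interchange[OF smc IY g D IHH] id_r[OF smc g] id_l[OF smc D] by simp
  have t3: "TnsM C (Cmp C (TnsM C g (Idm C H)) \<delta>) (Idm C H) =
      Cmp C (TnsM C (TnsM C g (Idm C H)) (Idm C H)) (TnsM C \<delta> (Idm C H))"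
    using interchange[OF smc d gH IH IH] id_l[OF smc IH] by simp
  have t4: "TnsM C (TnsM C g (Idm C H)) (Idm C H) = TnsM C g (Idm C (TnsO C H H))"
    using tnsM_assoc[OF smc g IH IH] tns_id[OF smc H H] by simp
  have "Cmp C (TnsM C (Idm C X) \<Delta>) (Cmp C (TnsM C g (Idm C H)) \<delta>)
      = Cmp C (TnsM C g \<Delta>) \<delta>" using comp_assoc[OF smc d gH XD] t1 by simp
  also have "\<dots> = Cmp C (TnsM C g (Idm C (TnsO C H H))) (Cmp C (TnsM C (Idm C Y) \<Delta>) \<delta>)"
    using comp_assoc[OF smc d YD gHH] t2 by simp
  also have "\<dots> = Cmp C (TnsM C g (Idm C (TnsO C H H))) (Cmp C (TnsM C \<delta> (Idm C H)) \<delta>)"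
    using de by simp
  also have "\<dots> = Cmp C (TnsM C (Cmp C (TnsM C g (Idm C H)) \<delta>) (Idm C H)) \<delta>"
    using comp_assoc[OF smc d dH gHH] t3 t4 by simp
  finally show ?thesis .
qed

end


context
  fixes C :: "('o,'m,'x) smcat_scheme"
  assumes smc: "strict_monoidal_category C"
begin

lemma slide1: assumes f: "f \<in> hom C A B" and g: "g \<in> hom C A' B'" shows
   "TnsM C f g = Cmp C (TnsM C f (Idm C B')) (TnsM C (Idm C A) g)"
proof -
  have A: "A \<in> Obj C" "B' \<in> Obj C" using hom_obj[OF smc f] hom_obj[OF smc g] by auto
  show ?thesis using interchange[OF smc id_hom[OF smc A(1)] f g id_hom[OF smc A(2)]]
    id_l[OF smc g] id_r[OF smc f] by simp
qed

lemma slide2: assumes f: "f \<in> hom C A B" and g: "g \<in> hom C A' B'" shows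
   "TnsM C f g = Cmp C (TnsM C (Idm C B) g) (TnsM C f (Idm C A'))"
proof -
  have A: "B \<in> Obj C" "A' \<in> Obj C" using hom_obj[OF smc f] hom_obj[OF smc g] by auto
  show ?thesis using interchange[OF smc f id_hom[OF smc A(1)] id_hom[OF smc A(2)] g]
    id_r[OF smc g] id_l[OF smc f] by simp
qed

lemma epsR: "f \<in> hom C A B \<Longrightarrow> e \<in> hom C H (Unt C) \<Longrightarrow>
   TnsM C f e = Cmp C f (TnsM C (Idm C A) e)"
  using slide1[of f A B e H "Unt C"] unitM_r[OF smc] by metis

lemma epsL: "f \<in> hom C A B \<Longrightarrow> e \<in> hom C H (Unt C) \<Longrightarrow>
   TnsM C f e = Cmp C (TnsM C (Idm C B) e) (TnsM C f (Idm C H))"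
  using slide2[of f A B e H "Unt C"] by metis

lemma comp_tns: assumes f: "f \<in> hom C A B" and f': "f' \<in> hom C B D" and K: "K \<in> Obj C" shows
   "TnsM C (Cmp C f' f) (Idm C K) = Cmp C (TnsM C f' (Idm C K)) (TnsM C f (Idm C K))"
  using interchange[OF smc f f' id_hom[OF smc K] id_hom[OF smc K]] id_l[OF smc id_hom[OF smc K]] by simp

end


context
  fixes C :: "('o,'m,'x) smcat_scheme"
  assumes smc: "strict_monoidal_category C"
begin

lemma A2:
  assumes f: "f \<in> hom C Y (TnsO C X H)" and d: "\<delta> \<in> hom C Y (TnsO C Y H)"
    and g: "g \<in> hom C Y X" and fdef: "f = Cmp C (TnsM C g (Idm C H)) \<delta>"
    and p: "\<pi> \<in> hom C (TnsO C X H) XH" and r: "\<rho> \<in> hom C X XH"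
    and eq: "Cmp C \<pi> f = Cmp C \<rho> g"
    and co: "Cmp C (TnsM C (Idm C X) \<Delta>) f = Cmp C (TnsM C f (Idm C H)) \<delta>"
    and D: "\<Delta> \<in> hom C H (TnsO C H H)"
  shows "Cmp C (TnsM C \<rho> (Idm C H)) f = Cmp C (TnsM C \<pi> (Idm C H)) (Cmp C (TnsM C (Idm C X) \<Delta>) f)"
proof -
  have H: "H \<in> Obj C" using hom_obj[OF smc D] by auto
  note IH = id_hom[OF smc H]
  have gH: "TnsM C g (Idm C H) \<in> hom C (TnsO C Y H) (TnsO C X H)" using tns_hom[OF smc g IH] .
  have fH: "TnsM C f (Idm C H) \<in> hom C (TnsO C Y H) (TnsO C (TnsO C X H) H)" using tns_hom[OF smc f IH] .
  have pH: "TnsM C \<pi> (Idm C H) \<in> hom C (TnsO C (TnsO C X H) H) (TnsO C XH H)" using tns_hom[OF smc p IH] .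
  have rH: "TnsM C \<rho> (Idm C H) \<in> hom C (TnsO C X H) (TnsO C XH H)" using tns_hom[OF smc r IH] .
  have "Cmp C (TnsM C \<pi> (Idm C H)) (Cmp C (TnsM C (Idm C X) \<Delta>) f)
      = Cmp C (Cmp C (TnsM C \<pi> (Idm C H)) (TnsM C f (Idm C H))) \<delta>"
    using co comp_assoc[OF smc d fH pH] by simp
  also have "\<dots> = Cmp C (TnsM C (Cmp C \<rho> g) (Idm C H)) \<delta>"
    using comp_tns[OF smc f p H] eq by simp
  also have "\<dots> = Cmp C (TnsM C \<rho> (Idm C H)) f"
    using comp_tns[OF smc g r H] comp_assoc[OF smc d gH rH] fdef by simp
  finally show ?thesis by simp
qed

lemma A3:
  assumes g: "g \<in> hom C Y X" and d: "\<delta> \<in> hom C Y (TnsO C Y H)"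
    and de: "Cmp C (TnsM C (Idm C Y) \<epsilon>) \<delta> = Idm C Y"
    and e: "\<epsilon> \<in> hom C H (Unt C)"
  shows "Cmp C (TnsM C (Idm C X) \<epsilon>) (Cmp C (TnsM C g (Idm C H)) \<delta>) = g"
proof -
  have X: "X \<in> Obj C" and Y: "Y \<in> Obj C" using hom_obj[OF smc g] by auto
  have H: "H \<in> Obj C" using hom_obj[OF smc e] by auto
  note IX = id_hom[OF smc X] and IY = id_hom[OF smc Y] and IH = id_hom[OF smc H]
  have gH: "TnsM C g (Idm C H) \<in> hom C (TnsO C Y H) (TnsO C X H)" using tns_hom[OF smc g IH] .
  have Xe: "TnsM C (Idm C X) \<epsilon> \<in> hom C (TnsO C X H) X" using tns_hom[OF smc IX e] unitO_r[OF smc X] by simp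
  have Ye: "TnsM C (Idm C Y) \<epsilon> \<in> hom C (TnsO C Y H) Y" using tns_hom[OF smc IY e] unitO_r[OF smc Y] by simp
  have "Cmp C (TnsM C (Idm C X) \<epsilon>) (Cmp C (TnsM C g (Idm C H)) \<delta>)
      = Cmp C (TnsM C g \<epsilon>) \<delta>"
    using comp_assoc[OF smc d gH Xe] epsL[OF smc g e] by simp
  also have "\<dots> = Cmp C g (Cmp C (TnsM C (Idm C Y) \<epsilon>) \<delta>)"
    using epsR[OF smc g e] comp_assoc[OF smc d Ye g] by simp
  also have "\<dots> = g" using de id_r[OF smc g] by simp
  finally show ?thesis .
qed

lemma B1:
  assumes f: "f \<in> hom C Y (TnsO C X H)" and d: "\<delta> \<in> hom C Y (TnsO C Y H)"
    and co: "Cmp C (TnsM C (Idm C X) \<Delta>) f = Cmp C (TnsM C f (Idm C H)) \<delta>"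
    and D: "\<Delta> \<in> hom C H (TnsO C H H)" and e: "\<epsilon> \<in> hom C H (Unt C)"
    and cu: "Cmp C (TnsM C \<epsilon> (Idm C H)) \<Delta> = Idm C H"
    and X: "X \<in> Obj C"
  shows "Cmp C (TnsM C (Cmp C (TnsM C (Idm C X) \<epsilon>) f) (Idm C H)) \<delta> = f"
proof -
  have H: "H \<in> Obj C" using hom_obj[OF smc e] by auto
  note IX = id_hom[OF smc X] and IH = id_hom[OF smc H]
  have Xe: "TnsM C (Idm C X) \<epsilon> \<in> hom C (TnsO C X H) X" using tns_hom[OF smc IX e] unitO_r[OF smc X] by simp
  have eH: "TnsM C \<epsilon> (Idm C H) \<in> hom C (TnsO C H H) H" using tns_hom[OF smc e IH] unitO_l[OF smc H] by simp
  have XeH: "TnsM C (TnsM C (Idm C X) \<epsilon>) (Idm C H) \<in> hom C (TnsO C X (TnsO C H H)) (TnsO C X H)"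
    using tns_hom[OF smc Xe IH] tnsO_assoc[OF smc X H H] by simp
  have fH: "TnsM C f (Idm C H) \<in> hom C (TnsO C Y H) (TnsO C X (TnsO C H H))"
    using tns_hom[OF smc f IH] tnsO_assoc[OF smc X H H] by simp
  have XD: "TnsM C (Idm C X) \<Delta> \<in> hom C (TnsO C X H) (TnsO C X (TnsO C H H))" using tns_hom[OF smc IX D] .
  have k: "Cmp C (TnsM C (TnsM C (Idm C X) \<epsilon>) (Idm C H)) (TnsM C (Idm C X) \<Delta>) = Idm C (TnsO C X H)"
    using tnsM_assoc[OF smc IX e IH] interchange[OF smc IX IX D eH] id_l[OF smc IX] cu tns_id[OF smc X H]
    by simp
  have "Cmp C (TnsM C (Cmp C (TnsM C (Idm C X) \<epsilon>) f) (Idm C H)) \<delta>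
     = Cmp C (TnsM C (TnsM C (Idm C X) \<epsilon>) (Idm C H)) (Cmp C (TnsM C f (Idm C H)) \<delta>)"
    using comp_tns[OF smc f Xe H] comp_assoc[OF smc d fH XeH] by simp
  also have "\<dots> = f" using co[symmetric] comp_assoc[OF smc f XD XeH] k id_l[OF smc f] by simp
  finally show ?thesis .
qed

lemma B2:
  assumes f: "f \<in> hom C Y (TnsO C X H)"
    and p: "\<pi> \<in> hom C (TnsO C X H) XH" and r: "\<rho> \<in> hom C X XH"
    and eq: "Cmp C (TnsM C \<rho> (Idm C H)) f = Cmp C (TnsM C \<pi> (Idm C H)) (Cmp C (TnsM C (Idm C X) \<Delta>) f)"
    and D: "\<Delta> \<in> hom C H (TnsO C H H)" and e: "\<epsilon> \<in> hom C H (Unt C)"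
    and cu: "Cmp C (TnsM C (Idm C H) \<epsilon>) \<Delta> = Idm C H"
  shows "Cmp C \<pi> f = Cmp C \<rho> (Cmp C (TnsM C (Idm C X) \<epsilon>) f)"
proof -
  have H: "H \<in> Obj C" using hom_obj[OF smc e] by auto
  have X: "X \<in> Obj C" and XH: "XH \<in> Obj C" using hom_obj[OF smc r] by auto
  note IX = id_hom[OF smc X] and IH = id_hom[OF smc H] and IXH = id_hom[OF smc XH]
  have Xe: "TnsM C (Idm C X) \<epsilon> \<in> hom C (TnsO C X H) X" using tns_hom[OF smc IX e] unitO_r[OF smc X] by simp
  have XHe: "TnsM C (Idm C XH) \<epsilon> \<in> hom C (TnsO C XH H) XH" using tns_hom[OF smc IXH e] unitO_r[OF smc XH] by simp
  have He: "TnsM C (Idm C H) \<epsilon> \<in> hom C (TnsO C H H) H" using tns_hom[OF smc IH e] unitO_r[OF smc H] by simp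
  have pH: "TnsM C \<pi> (Idm C H) \<in> hom C (TnsO C X (TnsO C H H)) (TnsO C XH H)"
    using tns_hom[OF smc p IH] tnsO_assoc[OF smc X H H] by simp
  have rH: "TnsM C \<rho> (Idm C H) \<in> hom C (TnsO C X H) (TnsO C XH H)" using tns_hom[OF smc r IH] .
  have XD: "TnsM C (Idm C X) \<Delta> \<in> hom C (TnsO C X H) (TnsO C X (TnsO C H H))" using tns_hom[OF smc IX D] .
  have XHe2: "TnsM C (Idm C X) (TnsM C (Idm C H) \<epsilon>) \<in> hom C (TnsO C X (TnsO C H H)) (TnsO C X H)"
    using tns_hom[OF smc IX He] .
  have p2: "TnsM C \<pi> \<epsilon> = Cmp C \<pi> (TnsM C (Idm C X) (TnsM C (Idm C H) \<epsilon>))"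
    using epsR[OF smc p e] tns_id[OF smc X H] tnsM_assoc[OF smc IX IH e] by simp
  have k: "Cmp C (TnsM C (Idm C X) (TnsM C (Idm C H) \<epsilon>)) (TnsM C (Idm C X) \<Delta>) = Idm C (TnsO C X H)"
    using interchange[OF smc IX IX D He] id_l[OF smc IX] cu tns_id[OF smc X H] by simp
  have "Cmp C \<rho> (Cmp C (TnsM C (Idm C X) \<epsilon>) f) = Cmp C (TnsM C \<rho> \<epsilon>) f"
    using epsR[OF smc r e] comp_assoc[OF smc f Xe r] by simp
  also have "\<dots> = Cmp C (TnsM C (Idm C XH) \<epsilon>) (Cmp C (TnsM C \<rho> (Idm C H)) f)"
    using epsL[OF smc r e] comp_assoc[OF smc f rH XHe] by simp
  also have "\<dots> = Cmp C (TnsM C (Idm C XH) \<epsilon>) (Cmp C (TnsM C \<pi> (Idm C H)) (Cmp C (TnsM C (Idm C X) \<Delta>) f))"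
    using eq by simp
  also have "\<dots> = Cmp C (TnsM C \<pi> \<epsilon>) (Cmp C (TnsM C (Idm C X) \<Delta>) f)"
    using epsL[OF smc p e] comp_assoc[OF smc comp_hom[OF smc f XD] pH XHe] by simp
  also have "\<dots> = Cmp C \<pi> f"
    using p2 comp_assoc[OF smc comp_hom[OF smc f XD] XHe2 p] comp_assoc[OF smc f XD XHe2] k id_l[OF smc f]
    by simp
  finally show ?thesis by simp
qed

end


context
  fixes C :: "('o,'m,'x) smcat_scheme"
  assumes smc: "strict_monoidal_category C"
begin

lemma NY1:
  assumes g: "g \<in> hom C Y X" and h: "h \<in> hom C Y' Y" and d': "\<delta>' \<in> hom C Y' (TnsO C Y' H)"
    and hc: "Cmp C \<delta> h = Cmp C (TnsM C h (Idm C H)) \<delta>'" and H: "H \<in> Obj C"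
    and d: "\<delta> \<in> hom C Y (TnsO C Y H)"
  shows "Cmp C (TnsM C (Cmp C g h) (Idm C H)) \<delta>' = Cmp C (Cmp C (TnsM C g (Idm C H)) \<delta>) h"
proof -
  note IH = id_hom[OF smc H]
  have gH: "TnsM C g (Idm C H) \<in> hom C (TnsO C Y H) (TnsO C X H)" using tns_hom[OF smc g IH] .
  have hH: "TnsM C h (Idm C H) \<in> hom C (TnsO C Y' H) (TnsO C Y H)" using tns_hom[OF smc h IH] .
  show ?thesis using comp_tns[OF smc h g H] comp_assoc[OF smc d' hH gH] hc[symmetric]
      comp_assoc[OF smc h d gH] by simp
qed

lemma NX2:
  assumes f: "f \<in> hom C Y (TnsO C X H)" and k: "k \<in> hom C X X'" and e: "\<epsilon> \<in> hom C H (Unt C)"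
  shows "Cmp C (TnsM C (Idm C X') \<epsilon>) (Cmp C (TnsM C k (Idm C H)) f) = Cmp C k (Cmp C (TnsM C (Idm C X) \<epsilon>) f)"
proof -
  have H: "H \<in> Obj C" using hom_obj[OF smc e] by auto
  have X: "X \<in> Obj C" and X': "X' \<in> Obj C" using hom_obj[OF smc k] by auto
  note IX = id_hom[OF smc X] and IH = id_hom[OF smc H] and IX' = id_hom[OF smc X']
  have Xe: "TnsM C (Idm C X) \<epsilon> \<in> hom C (TnsO C X H) X" using tns_hom[OF smc IX e] unitO_r[OF smc X] by simp
  have X'e: "TnsM C (Idm C X') \<epsilon> \<in> hom C (TnsO C X' H) X'" using tns_hom[OF smc IX' e] unitO_r[OF smc X'] by simp
  have kH: "TnsM C k (Idm C H) \<in> hom C (TnsO C X H) (TnsO C X' H)" using tns_hom[OF smc k IH] .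
  show ?thesis using comp_assoc[OF smc f kH X'e] epsL[OF smc k e] epsR[OF smc k e] comp_assoc[OF smc f Xe k]
    by simp
qed

end

theorem lemma3p3:
  fixes C :: "('o,'m,'x) smcat_scheme"
  assumes smc: "strict_monoidal_category C"
    and po: "has_pushouts C"
    and coalg: "coalgebra C H \<Delta> \<epsilon>"
    and gpc: "geometric_partial_comodule C H \<Delta> \<epsilon> X XH \<pi> \<rho>"
    and com: "comodule C H \<Delta> \<epsilon> Y \<delta>"
  shows
    \<comment> \<open>mutually inverse bijections\<close>
    "(\<forall>g \<in> pcom_hom_from_global C H Y \<delta> X XH \<pi> \<rho>.
        Cmp C (TnsM C g (Idm C H)) \<delta> \<in> equalizing_comodule_homs C H \<Delta> Y \<delta> X XH \<pi> \<rho> \<and>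
        Cmp C (TnsM C (Idm C X) \<epsilon>) (Cmp C (TnsM C g (Idm C H)) \<delta>) = g)
   \<and> (\<forall>f \<in> equalizing_comodule_homs C H \<Delta> Y \<delta> X XH \<pi> \<rho>.
        Cmp C (TnsM C (Idm C X) \<epsilon>) f \<in> pcom_hom_from_global C H Y \<delta> X XH \<pi> \<rho> \<and>
        Cmp C (TnsM C (Cmp C (TnsM C (Idm C X) \<epsilon>) f) (Idm C H)) \<delta> = f)
   \<comment> \<open>naturality in Y\<close>
   \<and> (\<forall>Y' \<delta>' h. comodule C H \<Delta> \<epsilon> Y' \<delta>' \<longrightarrow> comodule_hom C H Y' \<delta>' Y \<delta> h \<longrightarrow>
        (\<forall>g \<in> pcom_hom_from_global C H Y \<delta> X XH \<pi> \<rho>.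
           Cmp C (TnsM C (Cmp C g h) (Idm C H)) \<delta>' = Cmp C (Cmp C (TnsM C g (Idm C H)) \<delta>) h) \<and>
        (\<forall>f \<in> equalizing_comodule_homs C H \<Delta> Y \<delta> X XH \<pi> \<rho>.
           Cmp C (TnsM C (Idm C X) \<epsilon>) (Cmp C f h) = Cmp C (Cmp C (TnsM C (Idm C X) \<epsilon>) f) h))
   \<comment> \<open>naturality in X\<close>
   \<and> (\<forall>X' X'H \<pi>' \<rho>' k. geometric_partial_comodule C H \<Delta> \<epsilon> X' X'H \<pi>' \<rho>' \<longrightarrow>
        pcom_hom C H X XH \<pi> \<rho> X' X'H \<pi>' \<rho>' k \<longrightarrow>
        (\<forall>g \<in> pcom_hom_from_global C H Y \<delta> X XH \<pi> \<rho>.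
           Cmp C (TnsM C (Cmp C k g) (Idm C H)) \<delta> =
           Cmp C (TnsM C k (Idm C H)) (Cmp C (TnsM C g (Idm C H)) \<delta>)) \<and>
        (\<forall>f \<in> equalizing_comodule_homs C H \<Delta> Y \<delta> X XH \<pi> \<rho>.
           Cmp C (TnsM C (Idm C X') \<epsilon>) (Cmp C (TnsM C k (Idm C H)) f) =
           Cmp C k (Cmp C (TnsM C (Idm C X) \<epsilon>) f)))"
  proof -
  from coalg have H: "H \<in> Obj C" and D: "\<Delta> \<in> hom C H (TnsO C H H)" and e: "\<epsilon> \<in> hom C H (Unt C)"
    and cuL: "Cmp C (TnsM C \<epsilon> (Idm C H)) \<Delta> = Idm C H"
    and cuR: "Cmp C (TnsM C (Idm C H) \<epsilon>) \<Delta> = Idm C H"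
    unfolding coalgebra_def by auto
  from gpc have X: "X \<in> Obj C" and r: "\<rho> \<in> hom C X XH" and p: "\<pi> \<in> hom C (TnsO C X H) XH"
    unfolding geometric_partial_comodule_def partial_comodule_datum_def by auto
  from com have d: "\<delta> \<in> hom C Y (TnsO C Y H)"
    and de: "Cmp C (TnsM C \<delta> (Idm C H)) \<delta> = Cmp C (TnsM C (Idm C Y) \<Delta>) \<delta>"
    and dc: "Cmp C (TnsM C (Idm C Y) \<epsilon>) \<delta> = Idm C Y"
    unfolding comodule_def by auto
  note IX = id_hom[OF smc X] and IH = id_hom[OF smc H]
  have Xe: "TnsM C (Idm C X) \<epsilon> \<in> hom C (TnsO C X H) X" using tns_hom[OF smc IX e] unitO_r[OF smc X] by simp
  have P1: "\<forall>g \<in> pcom_hom_from_global C H Y \<delta> X XH \<pi> \<rho>.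
        Cmp C (TnsM C g (Idm C H)) \<delta> \<in> equalizing_comodule_homs C H \<Delta> Y \<delta> X XH \<pi> \<rho> \<and>
        Cmp C (TnsM C (Idm C X) \<epsilon>) (Cmp C (TnsM C g (Idm C H)) \<delta>) = g"
  proof
    fix g assume "g \<in> pcom_hom_from_global C H Y \<delta> X XH \<pi> \<rho>"
    then have g: "g \<in> hom C Y X" and eq: "Cmp C \<pi> (Cmp C (TnsM C g (Idm C H)) \<delta>) = Cmp C \<rho> g"
      unfolding pcom_hom_from_global_def by auto
    have f: "Cmp C (TnsM C g (Idm C H)) \<delta> \<in> hom C Y (TnsO C X H)"
      using comp_hom[OF smc d tns_hom[OF smc g IH]] .
    note co = A1[OF smc g d de D]
    note eqz = A2[OF smc f d g refl p r eq co D]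
    show "Cmp C (TnsM C g (Idm C H)) \<delta> \<in> equalizing_comodule_homs C H \<Delta> Y \<delta> X XH \<pi> \<rho> \<and>
        Cmp C (TnsM C (Idm C X) \<epsilon>) (Cmp C (TnsM C g (Idm C H)) \<delta>) = g"
      unfolding equalizing_comodule_homs_def comodule_hom_def
      using f co eqz A3[OF smc g d dc e] by simp
  qed
  have P2: "\<forall>f \<in> equalizing_comodule_homs C H \<Delta> Y \<delta> X XH \<pi> \<rho>.
        Cmp C (TnsM C (Idm C X) \<epsilon>) f \<in> pcom_hom_from_global C H Y \<delta> X XH \<pi> \<rho> \<and>
        Cmp C (TnsM C (Cmp C (TnsM C (Idm C X) \<epsilon>) f) (Idm C H)) \<delta> = f"
  proof
    fix f assume "f \<in> equalizing_comodule_homs C H \<Delta> Y \<delta> X XH \<pi> \<rho>"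
    then have f: "f \<in> hom C Y (TnsO C X H)"
      and co: "Cmp C (TnsM C (Idm C X) \<Delta>) f = Cmp C (TnsM C f (Idm C H)) \<delta>"
      and eq: "Cmp C (TnsM C \<rho> (Idm C H)) f = Cmp C (TnsM C \<pi> (Idm C H)) (Cmp C (TnsM C (Idm C X) \<Delta>) f)"
      unfolding equalizing_comodule_homs_def comodule_hom_def by auto
    note b1 = B1[OF smc f d co D e cuL X]
    show "Cmp C (TnsM C (Idm C X) \<epsilon>) f \<in> pcom_hom_from_global C H Y \<delta> X XH \<pi> \<rho> \<and>
        Cmp C (TnsM C (Cmp C (TnsM C (Idm C X) \<epsilon>) f) (Idm C H)) \<delta> = f"
      unfolding pcom_hom_from_global_def using b1 B2[OF smc f p r eq D e cuR] comp_hom[OF smc f Xe] by simp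
  qed
  have P3: "\<forall>Y' \<delta>' h. comodule C H \<Delta> \<epsilon> Y' \<delta>' \<longrightarrow> comodule_hom C H Y' \<delta>' Y \<delta> h \<longrightarrow>
        (\<forall>g \<in> pcom_hom_from_global C H Y \<delta> X XH \<pi> \<rho>.
           Cmp C (TnsM C (Cmp C g h) (Idm C H)) \<delta>' = Cmp C (Cmp C (TnsM C g (Idm C H)) \<delta>) h) \<and>
        (\<forall>f \<in> equalizing_comodule_homs C H \<Delta> Y \<delta> X XH \<pi> \<rho>.
           Cmp C (TnsM C (Idm C X) \<epsilon>) (Cmp C f h) = Cmp C (Cmp C (TnsM C (Idm C X) \<epsilon>) f) h)"
  proof (intro allI impI conjI ballI)
    fix Y' \<delta>' h assume c': "comodule C H \<Delta> \<epsilon> Y' \<delta>'" and hh: "comodule_hom C H Y' \<delta>' Y \<delta> h"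
    from c' have d': "\<delta>' \<in> hom C Y' (TnsO C Y' H)" unfolding comodule_def by auto
    from hh have h: "h \<in> hom C Y' Y" and hc: "Cmp C \<delta> h = Cmp C (TnsM C h (Idm C H)) \<delta>'"
      unfolding comodule_hom_def by auto
    {
      fix g assume "g \<in> pcom_hom_from_global C H Y \<delta> X XH \<pi> \<rho>"
      then have g: "g \<in> hom C Y X" unfolding pcom_hom_from_global_def by auto
      show "Cmp C (TnsM C (Cmp C g h) (Idm C H)) \<delta>' = Cmp C (Cmp C (TnsM C g (Idm C H)) \<delta>) h"
        using NY1[OF smc g h d' hc H d] .
    }
    {
      fix f assume "f \<in> equalizing_comodule_homs C H \<Delta> Y \<delta> X XH \<pi> \<rho>"
      then have f: "f \<in> hom C Y (TnsO C X H)"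
        unfolding equalizing_comodule_homs_def comodule_hom_def by auto
      show "Cmp C (TnsM C (Idm C X) \<epsilon>) (Cmp C f h) = Cmp C (Cmp C (TnsM C (Idm C X) \<epsilon>) f) h"
        using comp_assoc[OF smc h f Xe] .
    }
  qed
  have P4: "\<forall>X' X'H \<pi>' \<rho>' k. geometric_partial_comodule C H \<Delta> \<epsilon> X' X'H \<pi>' \<rho>' \<longrightarrow>
        pcom_hom C H X XH \<pi> \<rho> X' X'H \<pi>' \<rho>' k \<longrightarrow>
        (\<forall>g \<in> pcom_hom_from_global C H Y \<delta> X XH \<pi> \<rho>.
           Cmp C (TnsM C (Cmp C k g) (Idm C H)) \<delta> =
           Cmp C (TnsM C k (Idm C H)) (Cmp C (TnsM C g (Idm C H)) \<delta>)) \<and>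
        (\<forall>f \<in> equalizing_comodule_homs C H \<Delta> Y \<delta> X XH \<pi> \<rho>.
           Cmp C (TnsM C (Idm C X') \<epsilon>) (Cmp C (TnsM C k (Idm C H)) f) =
           Cmp C k (Cmp C (TnsM C (Idm C X) \<epsilon>) f))"
  proof (intro allI impI conjI ballI)
    fix X' X'H \<pi>' \<rho>' k assume "pcom_hom C H X XH \<pi> \<rho> X' X'H \<pi>' \<rho>' k"
    then have k: "k \<in> hom C X X'" unfolding pcom_hom_def by auto
    have kH: "TnsM C k (Idm C H) \<in> hom C (TnsO C X H) (TnsO C X' H)" using tns_hom[OF smc k IH] .
    {
      fix g assume "g \<in> pcom_hom_from_global C H Y \<delta> X XH \<pi> \<rho>"
      then have g: "g \<in> hom C Y X" unfolding pcom_hom_from_global_def by auto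
      have gH: "TnsM C g (Idm C H) \<in> hom C (TnsO C Y H) (TnsO C X H)" using tns_hom[OF smc g IH] .
      show "Cmp C (TnsM C (Cmp C k g) (Idm C H)) \<delta> =
           Cmp C (TnsM C k (Idm C H)) (Cmp C (TnsM C g (Idm C H)) \<delta>)"
        using comp_tns[OF smc g k H] comp_assoc[OF smc d gH kH] by simp
    }
    {
      fix f assume "f \<in> equalizing_comodule_homs C H \<Delta> Y \<delta> X XH \<pi> \<rho>"
      then have f: "f \<in> hom C Y (TnsO C X H)"
        unfolding equalizing_comodule_homs_def comodule_hom_def by auto
      show "Cmp C (TnsM C (Idm C X') \<epsilon>) (Cmp C (TnsM C k (Idm C H)) f) =
           Cmp C k (Cmp C (TnsM C (Idm C X) \<epsilon>) f)"
        using NX2[OF smc f k e] .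
    }
  qed
  show ?thesis using P1 P2 P3 P4 by blast
qed

end
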